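(* For every $q\in\mathbb N$, \[ \frac{2^{4q}}{2q\binom{2q}{q}}=\sum_{l=0}^{q} \binom{2l}{l} \binom{2q-2l}{q-l} \frac{1}{(2l-1)^2}. \] *)

theory Defs
  imports Complex_Main
begin

end

theory Submission
  imports Defs
begin

lemma cb_aux:
  fixes x v f g :: real
  assumes "v \<noteq> 0" "f \<noteq> 0" and e: "v = x + 1"
  shows "(2*x+2)*(2*x+1)*g / (v*f*(v*f)) = g/(f*f)*(2*(2*x+1))/v"
  using assms(1,2)
  apply (simp add: field_simps)
  apply (simp only: e)
  apply (simp add: algebra_simps)
  done

lemma cb_step: "real ((2 * Suc n) choose Suc n) = real ((2*n) choose n) * (2*(2*real n+1)) / (real n + 1)"
proof -
  have a: "real ((2 * Suc n) choose Suc n) = fact (2*n+2) / (fact (n+1) * fact (n+1))"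
    by (subst binomial_fact) auto
  have b: "real ((2*n) choose n) = fact (2*n) / (fact n * fact n)"
    by (subst binomial_fact) auto
  have f1: "(fact (2*n+2)::real) = (2*real n+2)*(2*real n+1)*fact (2*n)"
    by (simp add: fact_Suc algebra_simps numeral_2_eq_2)
  have f2: "(fact (n+1)::real) = (real n+1)*fact n" by (simp add: fact_Suc algebra_simps)
  show ?thesis unfolding a b f1 f2 by (rule cb_aux) auto
qed

definition B :: "nat \<Rightarrow> real" where "B m = real ((2*m) choose m)"
definition F :: "nat \<Rightarrow> nat \<Rightarrow> real" where
  "F q l = B l * B (q - l) / (2 * real l - 1) ^ 2"
definition G :: "nat \<Rightarrow> nat \<Rightarrow> real" where
  "G q l = real l * (real q + 2 - 2 * real l) * B l * B (q + 1 - l) / ((2 * real l - 1) * real q * (real q + 1))"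

lemma B_Suc: "B (Suc n) = B n * (2*(2*real n+1)) / (real n + 1)"
  unfolding B_def by (rule cb_step)

lemma aux:
  fixes x y c d p u v w s t :: real
  assumes nz: "p \<noteq> 0" "u \<noteq> 0" "v \<noteq> 0" "w \<noteq> 0" "s \<noteq> 0" "t \<noteq> 0"
  and eq: "p = 2*x-1" "u = y+1" "v = x+1" "w = 2*x+1" "s = x+y" "t = x+y+1"
  shows "(2*s+1) * (c * (d*(2*(2*y+1))/u) / p^2) - 8*s * (c*d/p^2)
  = v*(s+2-2*v) * (c*(2*w)/v) * d / (w*s*t)
  - x*(s+2-2*x)*c*(d*(2*(2*y+1))/u) / (p*s*t)"
using nz
  apply (simp add: field_simps)
  apply (simp only: eq)
  apply (simp add: power4_eq_xxxx power2_eq_square)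
  apply (simp add: algebra_simps)
  done


lemma step_term:
  assumes "l \<le> q" "q \<ge> 1"
  shows "(2*real q+1) * F (Suc q) l - 8 * real q * F q l = G q (Suc l) - G q l"
proof -
  obtain m where m: "q = l + m" using assms by (metis le_add_diff_inverse)
  have e1: "Suc q - l = Suc m" using m by simp
  have e2: "q - l = m" using m by simp
  have e3: "q + 1 - Suc l = m" using m by simp
  have e4: "q + 1 - l = Suc m" using m by simp
  have h1: "2 * real l - 1 \<noteq> 0"
  proof
    assume "2 * real l - 1 = 0"
    then have "real (2*l) = real 1" by simp
    then have "2*l = 1" by linarith
    then show False by presburger
  qed
  have A: "(2*(real l+real m)+1) * (B l * (B m*(2*(2*real m+1))/(real m+1)) / (2*real l-1)^2) - 8*(real l+real m) * (B l*B m/(2*real l-1)^2)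
  = (real l+1)*((real l+real m)+2-2*(real l+1)) * (B l*(2*(2*real l+1))/(real l+1)) * B m / ((2*real l+1)*(real l+real m)*(real l+real m+1))
  - real l*((real l+real m)+2-2*real l)*B l*(B m*(2*(2*real m+1))/(real m+1)) / ((2*real l-1)*(real l+real m)*((real l+real m)+1))"
    by (rule aux) (use h1 assms m in auto)
  show ?thesis
    unfolding F_def G_def e1 e2 e3 e4 B_Suc
    using A unfolding m by (simp add: algebra_simps)
qed

lemma B_pos: "B n > 0" unfolding B_def by simp

lemma G0: "G q 0 = 0" unfolding G_def by simp

lemma GSuc_aux: "(a::real) \<noteq> 0 \<Longrightarrow> x \<noteq> 0 \<Longrightarrow> w \<noteq> 0 \<Longrightarrow> a*(-x)*b*1/(w*x*a) = -b/w"
  by (simp add: field_simps)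

lemma GSuc: assumes "q \<ge> 1" shows "G q (Suc q) = - B (Suc q) / (2*real q+1)"
proof -
  have e1: "2*real (Suc q) - 1 = 2*real q+1" by simp
  have e2: "real q + 2 - 2*real (Suc q) = - real q" by simp
  have e3: "B (q + 1 - Suc q) = 1" by (simp add: B_def)
  have "G q (Suc q) = real (Suc q) * (- real q) * B (Suc q) * 1 / ((2*real q+1) * real q * real (Suc q))"
    unfolding G_def e1 e2 e3 by (simp only: of_nat_Suc add.commute)
  also have "\<dots> = - B (Suc q) / (2*real q+1)"
    by (rule GSuc_aux) (use assms in auto)
  finally show ?thesis .
qed

lemma fin_aux: "(w::real) \<noteq> 0 \<Longrightarrow> w*X - Y = -b/w \<Longrightarrow> Z = X + b/w^2 \<Longrightarrow> Z = Y/w * 1"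
  by (simp add: field_simps power2_eq_square)

lemma T_aux: "(v::real) \<noteq> 0 \<Longrightarrow> w \<noteq> 0 \<Longrightarrow> x \<noteq> 0 \<Longrightarrow> b \<noteq> 0 \<Longrightarrow>
   16*P/(2*v*(b*(2*w)/v)) = 8*x/w*(P/(2*x*b))"
  by (simp add: field_simps)

definition S :: "nat \<Rightarrow> real" where "S q = (\<Sum>l=0..q. F q l)"

lemma S_step: assumes "q \<ge> 1" shows "S (Suc q) = 8 * real q / (2*real q+1) * S q"
proof -
  have "(\<Sum>l=0..q. (2*real q+1) * F (Suc q) l - 8 * real q * F q l) = (\<Sum>l=0..q. G q (Suc l) - G q l)"
    by (rule sum.cong) (use step_term assms in auto)
  also have "\<dots> = G q (Suc q) - G q 0" by (rule sum_Suc_diff) simp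
  finally have 1: "(2*real q+1) * (\<Sum>l=0..q. F (Suc q) l) - 8 * real q * S q = - B (Suc q) / (2*real q+1)"
    unfolding S_def sum_subtractf sum_distrib_left[symmetric] G0 GSuc[OF assms] by simp
  have 2: "S (Suc q) = (\<Sum>l=0..q. F (Suc q) l) + B (Suc q) / (2*real q+1)^2"
    unfolding S_def F_def by (simp add: B_def)
  have nz: "2*real q+1 \<noteq> 0" by (simp add: add_pos_pos)
  have "S (Suc q) = 8 * real q * S q / (2*real q+1) * 1"
    by (rule fin_aux[OF nz 1 2])
  then show ?thesis by simp
qed

lemma T_step: "2 ^ (4 * Suc q) / (2 * real (Suc q) * B (Suc q)) = 8 * real q / (2*real q+1) * (2 ^ (4 * q) / (2 * real q * B q))"
  if "q \<ge> 1" for q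
proof -
  have h1: "(2::real) ^ (4 * Suc q) = 16 * 2^(4*q)" by (simp add: power_add)
  have h2: "real (Suc q) = real q + 1" by simp
  have h3: "16 * 2 ^ (4 * q) / (2 * (real q + 1) * B (Suc q)) = 8 * real q / (2*real q+1) * (2 ^ (4 * q) / (2 * real q * B q))"
    unfolding B_Suc[of q]
    by (rule T_aux) (use that B_pos[of q] in \<open>auto simp: add_pos_pos\<close>)
  show ?thesis unfolding h1 h2 by (rule h3)
qed

theorem lemma5p3:
  fixes q :: nat
  assumes "q \<ge> 1"
  shows "2 ^ (4 * q) / (2 * real q * real ((2 * q) choose q)) =
         (\<Sum>l = 0..q. real ((2 * l) choose l) * real ((2 * q - 2 * l) choose (q - l))
              / (2 * real l - 1) ^ 2)"
proof -
  have R: "(\<Sum>l = 0..q. real ((2 * l) choose l) * real ((2 * q - 2 * l) choose (q - l))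
              / (2 * real l - 1) ^ 2) = S q"
    unfolding S_def F_def B_def by (rule sum.cong) (auto simp: diff_mult_distrib2)
  have "2 ^ (4 * q) / (2 * real q * B q) = S q" using assms
  proof (induction q rule: dec_induct)
    case base
    show ?case by (simp add: S_def F_def B_def)
  next
    case (step n)
    have "2 ^ (4 * Suc n) / (2 * real (Suc n) * B (Suc n)) = 8 * real n / (2*real n+1) * (2 ^ (4 * n) / (2 * real n * B n))"
      by (rule T_step) (use step in auto)
    also have "\<dots> = 8 * real n / (2*real n+1) * S n" using step.IH by simp
    also have "\<dots> = S (Suc n)" using S_step step by simp
    finally show ?case .
  qed
  then show ?thesis unfolding R by (simp add: B_def)
qed

end
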